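(* Let $d$ and $p$ be integers with $d>p\ge 2$ and let \[ f_{d,p}(m)=\sum_{j=1}^{p}\binom{j+m-2}{j-1}\binom{d-j+m}{d-j}. \] If $d-2p+2\ge 0$, then the set of complex roots of $f_{d,p}$ is \[ \{-1,-2,\ldots,-(d-p),\alpha_1,\alpha_2,\ldots,\alpha_{p-1}\}, \] where $\alpha_1,\ldots,\alpha_{p-1}$ are real numbers with \[ -(p-1)<\alpha_{p-1}<-(p-2)<\alpha_{p-2}<-(p-3)<\cdots<-1<\alpha_1<0. \]
   Context: For an integer $a\ge 0$, $\binom{a+x}{a}$ denotes the polynomial $\prod_{i=1}^{a}(x+i)/a!$ in $x$; so $\binom{j+m-2}{j-1}=\prod_{i=0}^{j-2}(m+i)/(j-1)!$ and $\binom{d-j+m}{d-j}=\prod_{i=1}^{d-j}(m+i)/(d-j)!$. *)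

theory Defs
  imports Complex_Main
begin

text \<open>binom_poly a x = binom(a+x, a) = prod_{i=1..a} (x+i) / a!, as a function of complex x.\<close>
definition binom_poly :: "nat \<Rightarrow> complex \<Rightarrow> complex" where
  "binom_poly a x = (\<Prod>i\<in>{1..a}. x + of_nat i) / of_nat (fact a)"

text \<open>f_{d,p}(m) = sum_{j=1..p} binom(j+m-2, j-1) * binom(d-j+m, d-j);
  here binom(j+m-2, j-1) = binom((j-1)+(m-1), j-1) = prod_{i=0..j-2}(m+i)/(j-1)!.\<close>
definition f_dp :: "nat \<Rightarrow> nat \<Rightarrow> complex \<Rightarrow> complex" where
  "f_dp d p m = (\<Sum>j\<in>{1..p}.
      ((\<Prod>i<j - 1. m + of_nat i) / of_nat (fact (j - 1))) * binom_poly (d - j) m)"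

end

theory Submission imports Defs "HOL-Computational_Algebra.Polynomial" begin

lemma D_step:
  fixes \<psi> :: "nat \<Rightarrow> real"
  shows "(\<Sum>t\<le>Suc k. (-1)^t * real (Suc k choose t) * \<psi> t) =
         (\<Sum>t\<le>k. (-1)^t * real (k choose t) * \<psi> t) - (\<Sum>t\<le>k. (-1)^t * real (k choose t) * \<psi> (Suc t))"
proof -
  have "(\<Sum>t\<le>Suc k. (-1)^t * real (Suc k choose t) * \<psi> t) =
        \<psi> 0 + (\<Sum>t\<le>k. (-1)^(Suc t) * real (Suc k choose Suc t) * \<psi> (Suc t))"
    by (subst sum.atMost_Suc_shift) simp
  also have "\<dots> = \<psi> 0 + (\<Sum>t\<le>k. (-1)^(Suc t) * real (k choose Suc t) * \<psi> (Suc t))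
      - (\<Sum>t\<le>k. (-1)^t * real (k choose t) * \<psi> (Suc t))"
    by (simp add: sum_subtractf[symmetric] sum.distrib[symmetric] algebra_simps)
  also have "\<psi> 0 + (\<Sum>t\<le>k. (-1)^(Suc t) * real (k choose Suc t) * \<psi> (Suc t))
      = (\<Sum>t\<le>Suc k. (-1)^t * real (k choose t) * \<psi> t)"
    by (subst sum.atMost_Suc_shift) simp
  also have "\<dots> = (\<Sum>t\<le>k. (-1)^t * real (k choose t) * \<psi> t)"
    by simp
  finally show ?thesis .
qed

lemma aux:
  fixes c G F x y :: real assumes "F > 0" "x \<ge> 0" "y \<ge> 0"
  shows "c*((y+1)*G)/((x+y+1)*F) - c*G/F = -(c*x*G)/((x+y+1)*F)"
proof -
  have d: "(x+y+1)*F \<noteq> 0" using assms by simp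
  have "c*G/F = (c*G*(x+y+1))/((x+y+1)*F)" using d by simp
  then have "c*((y+1)*G)/((x+y+1)*F) - c*G/F = (c*((y+1)*G) - c*G*(x+y+1))/((x+y+1)*F)"
    by (simp add: diff_divide_distrib)
  also have "c*((y+1)*G) - c*G*(x+y+1) = -(c*x*G)" by (simp add: algebra_simps)
  finally show ?thesis by simp
qed

lemma D_closed:
  "a + k \<le> s \<Longrightarrow> (\<Sum>t\<le>k. (-1)^t * real (k choose t) * (fact (s - t - a) / fact (s - t))) =
     (-1)^k * pochhammer (real a) k * fact (s - a - k) / fact s"
proof (induction k arbitrary: s)
  case 0 then show ?case by simp
next
  case (Suc k)
  have s1: "s \<ge> 1" using Suc.prems by simp
  have IH1: "(\<Sum>t\<le>k. (-1)^t * real (k choose t) * (fact (s - t - a) / fact (s - t))) =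
     (-1)^k * pochhammer (real a) k * fact (s - a - k) / fact s" using Suc by simp
  have IH2: "(\<Sum>t\<le>k. (-1)^t * real (k choose t) * (fact ((s-1) - t - a) / fact ((s-1) - t))) =
     (-1)^k * pochhammer (real a) k * fact ((s-1) - a - k) / fact (s-1)" using Suc.IH[of "s-1"] Suc.prems by simp
  have e: "\<And>t. (s - 1 - t - a) = s - Suc t - a" "\<And>t. s - 1 - t = s - Suc t" by auto
  obtain r where r: "s = Suc (a + k + r)" using Suc.prems by (metis add_Suc_right le_iff_add plus_1_eq_Suc add.commute)
  have ps: "pochhammer (real a) (Suc k) = pochhammer (real a) k * (real a + real k)"
    by (simp add: pochhammer_rec')
  have "(\<Sum>t\<le>Suc k. (-1)^t * real (Suc k choose t) * (fact (s - t - a) / fact (s - t))) =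
     (-1)^k * pochhammer (real a) k * fact (s - a - k) / fact s
     - (-1)^k * pochhammer (real a) k * fact ((s-1) - a - k) / fact (s-1)"
    apply (subst D_step)
    apply (simp only: e[symmetric] IH1 IH2)
    done
  also have "\<dots> = (-1)^k * pochhammer (real a) k * ((real r + 1) * fact r) / ((real a + real k + real r + 1) * fact (a+k+r))
     - (-1)^k * pochhammer (real a) k * fact r / fact (a+k+r)"
    by (simp add: r algebra_simps)
  also have "\<dots> = - ((-1)^k * pochhammer (real a) k * (real a + real k) * fact r) / ((real a + real k + real r + 1) * fact (a+k+r))"
    by (rule aux) auto
  also have "\<dots> = (-1)^(Suc k) * pochhammer (real a) (Suc k) * fact (s - a - Suc k) / fact s"
    by (simp add: r ps algebra_simps)
  finally show ?case .
qed
definition Gf :: "nat \<Rightarrow> nat \<Rightarrow> 'a::real_field \<Rightarrow> 'a" where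
  "Gf d p x = (\<Sum>j\<in>{1..p}. ((\<Prod>i<j - 1. x + of_nat i) / of_nat (fact (j - 1))) *
      ((\<Prod>i\<in>{d-p+1..d-j}. x + of_nat i) / of_nat (fact (d - j))))"

lemma L1: "t \<le> k \<Longrightarrow> (\<Prod>i<t. - real k + real i) = (-1)^t * fact k / fact (k - t)"
proof (induction t)
  case 0 then show ?case by simp
next
  case (Suc t)
  have f: "fact (k - t) = real (k - t) * fact (k - Suc t)"
    using Suc.prems by (metis Suc_diff_Suc fact_Suc less_eq_Suc_le of_nat_fact of_nat_mult)
  have "(\<Prod>i<Suc t. - real k + real i) = (-1)^t * fact k / fact (k - t) * (- real k + real t)"
    using Suc by simp
  also have "\<dots> = (-1)^(Suc t) * fact k / fact (k - Suc t)"
    using Suc.prems by (simp add: f of_nat_diff field_simps)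
  finally show ?case .
qed

lemma L2: "k < t \<Longrightarrow> (\<Prod>i<t. - real k + real i) = 0"
  by (rule prod_zero) (auto intro: bexI[of _ k])

lemma L3: assumes kn: "k \<le> n" and nm: "n \<le> m" shows "(\<Prod>i\<in>{n+1..m}. - real k + real i) = fact (m - k) / fact (n - k)"
  using nm
proof (induction m rule: dec_induct)
  case base then show ?case by simp
next
  case (step m)
  have "{n+1..Suc m} = insert (Suc m) {n+1..m}" using step by auto
  then have "(\<Prod>i\<in>{n+1..Suc m}. - real k + real i) = (- real k + real (Suc m)) * (fact (m - k) / fact (n - k))"
    using step by simp
  also have "\<dots> = fact (Suc m - k) / fact (n - k)"
    using step kn by (simp add: Suc_diff_le of_nat_diff)
  finally show ?case .
qed

lemma L3': "k \<le> m \<Longrightarrow> n < k \<Longrightarrow> (\<Prod>i\<in>{n+1..m}. - real k + real i) = 0"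
  by (rule prod_zero) (auto intro: bexI[of _ k])

lemma Geval:
  assumes kp: "k < p" and kn: "k \<le> d - p" and kd: "2*k + 1 \<le> d" and pd: "p < d"
  shows "Gf d p (- real k) = (-1)^k * pochhammer (real k) k * fact (d-1-k-k) / fact (d-1) / fact (d-p-k)"
proof -
  define T where "T j = ((\<Prod>i<j - 1. - real k + of_nat i) / of_nat (fact (j - 1))) *
      ((\<Prod>i\<in>{d-p+1..d-j}. - real k + of_nat i) / of_nat (fact (d - j)))" for j
  have "Gf d p (- real k) = sum T {Suc 0..p}" by (simp add: Gf_def T_def)
  also have "\<dots> = (\<Sum>t<p. T (Suc t))" by (rule sum.atLeast1_atMost_eq)
  also have "\<dots> = (\<Sum>t\<le>k. T (Suc t))"
  proof (rule sum.mono_neutral_right)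
    show "finite {..<p}" by simp
    show "{..k} \<subseteq> {..<p}" using kp by auto
    show "\<forall>i\<in>{..<p} - {..k}. T (Suc i) = 0" unfolding T_def using L2 by auto
  qed
  also have "\<dots> = (\<Sum>t\<le>k. (-1)^t * real (k choose t) * (fact (d - 1 - t - k) / fact (d - 1 - t))) / fact (d-p-k)"
    unfolding sum_divide_distrib
  proof (rule sum.cong)
    fix t assume "t \<in> {..k}"
    then have tk: "t \<le> k" by simp
    have a: "(\<Prod>i<t. - real k + real i) = (-1)^t * fact k / fact (k - t)" using L1 tk by simp
    have b: "(\<Prod>i\<in>{d-p+1..d - Suc t}. - real k + real i) = fact (d - Suc t - k) / fact (d-p - k)"
      using L3[of k "d-p" "d - Suc t"] kn kp tk by simp
    have c: "real (k choose t) = fact k / (fact t * fact (k - t))" using binomial_fact tk by blast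
    show "T (Suc t) = (-1)^t * real (k choose t) * (fact (d - 1 - t - k) / fact (d - 1 - t)) / fact (d-p-k)"
    proof -
      have "T (Suc t) = ((-1)^t * fact k / fact (k-t)) / fact t * (fact (d - 1 - t - k) / fact (d-p-k) / fact (d - 1 - t))"
        unfolding T_def using a b by simp
      also have "((-1)^t * (fact k::real) / fact (k-t)) / fact t * (fact (d - 1 - t - k) / fact (d-p-k) / fact (d - 1 - t))
         = (-1)^t * (fact k / (fact t * fact (k - t))) * (fact (d - 1 - t - k) / fact (d - 1 - t)) / fact (d-p-k)"
        by (simp add: field_simps)
      finally show ?thesis using c by simp
    qed
  qed simp
  also have "\<dots> = (-1)^k * pochhammer (real k) k * fact (d-1-k-k) / fact (d-1) / fact (d-p-k)"
    using D_closed[of k k "d-1"] kd by simp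
  finally show ?thesis .
qed

lemma Gspecial:
  assumes dp: "d = 2*p - 2" and p2: "2 \<le> p"
  shows "Gf d p (- real (p-1)) = (-1)^(p-1) / fact (d-p)"
proof -
  define k where "k = p - 1"
  define T where "T j = ((\<Prod>i<j - 1. - real k + of_nat i) / of_nat (fact (j - 1))) *
      ((\<Prod>i\<in>{d-p+1..d-j}. - real k + of_nat i) / of_nat (fact (d - j)))" for j
  have "Gf d p (- real (p-1)) = sum T {1..p}" by (simp add: Gf_def T_def k_def)
  also have "{1..p} = insert p {1..p-1}" using p2 by auto
  also have "sum T (insert p {1..p-1}) = T p + sum T {1..p-1}" using p2 by (subst sum.insert) auto
  also have "sum T {1..p-1} = 0"
  proof (rule sum.neutral, rule ballI)
    fix j assume j: "j \<in> {1..p-1}"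
    have "(\<Prod>i\<in>{d-p+1..d-j}. - real k + real i) = 0"
      using L3'[of k "d-j" "d-p"] j dp p2 unfolding k_def by auto
    then show "T j = 0" unfolding T_def by simp
  qed
  also have "T p = (-1)^k / fact (d-p)"
  proof -
    have a: "(\<Prod>i<p-1. - real k + real i) = (-1)^k * fact k" using L1[of k k] unfolding k_def by simp
    show ?thesis unfolding T_def using a by (simp add: k_def)
  qed
  finally show ?thesis by (simp add: k_def)
qed

lemma Gsign:
  assumes p2: "2 \<le> p" and pd: "p < d" and c: "2*p \<le> d + 2" and kp: "k < p"
  shows "(-1)^k * Gf d p (- real k) > (0::real)"
proof (cases "d = 2*p - 2 \<and> k = p - 1")
  case True
  then have "(-1)^k * Gf d p (- real k) = 1 / fact (d-p)"
    using Gspecial[of d p] p2 by (simp add: power_mult_distrib[symmetric])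
  then show ?thesis by simp
next
  case False
  then have kn: "k \<le> d - p" and kd: "2*k+1 \<le> d" using p2 pd c kp by auto
  have pos: "pochhammer (real k) k > 0"
  proof (cases "k = 0")
    case True then show ?thesis by simp
  next
    case False then show ?thesis by (intro pochhammer_pos) simp
  qed
  have "(-1)^k * Gf d p (- real k) = ((-1)^k * (-1)^k) * pochhammer (real k) k * fact (d-1-k-k) / fact (d-1) / fact (d-p-k)"
    using Geval[OF kp kn kd pd] by simp
  also have "(-1)^k * (-1)^k = (1::real)" by (simp add: power_mult_distrib[symmetric])
  finally show ?thesis using pos by simp
qed

definition gp :: "nat \<Rightarrow> nat \<Rightarrow> 'a::real_field poly" where
  "gp d p = (\<Sum>j\<in>{1..p}. smult (inverse (of_nat (fact (j - 1)) * of_nat (fact (d - j))))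
     ((\<Prod>i<j - 1. [:of_nat i, 1:]) * (\<Prod>i\<in>{d-p+1..d-j}. [:of_nat i, 1:])))"

lemma poly_gp: "poly (gp d p) x = Gf d p x"
  unfolding gp_def Gf_def poly_sum
  by (rule sum.cong) (simp_all add: poly_prod add.commute field_simps)

lemma degree_gp: assumes "p < d" shows "degree (gp d p :: 'a::real_field poly) \<le> p - 1"
  unfolding gp_def
proof (rule degree_sum_le)
  fix j assume j: "j \<in> {1..p}"
  let ?A = "(\<Prod>i<j - 1. [:of_nat i, 1:]) :: 'a poly"
  let ?B = "(\<Prod>i\<in>{d-p+1..d-j}. [:of_nat i, 1:]) :: 'a poly"
  have "degree ?A \<le> j - 1"
    using degree_prod_sum_le[of "{..<j-1}" "\<lambda>i. [:of_nat i, 1::'a:]"] by simp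
  moreover have "degree ?B \<le> p - j"
    using degree_prod_sum_le[of "{d-p+1..d-j}" "\<lambda>i. [:of_nat i, 1::'a:]"] j assms by simp
  ultimately have "degree (?A * ?B) \<le> p - 1"
    using degree_mult_le[of ?A ?B] j by (simp only: atLeastAtMost_iff) linarith
  then show "degree (smult (inverse (of_nat (fact (j - 1)) * of_nat (fact (d - j)))) (?A * ?B)) \<le> p - 1"
    using degree_smult_le order_trans by blast
qed simp

lemma Gf_of_real: "Gf d p (complex_of_real x) = complex_of_real (Gf d p x)"
  by (simp add: Gf_def)

lemma cont_Gf: "continuous_on S (Gf d p :: real \<Rightarrow> real)"
proof -
  have "continuous_on S (\<lambda>x. poly (gp d p) (x::real))" by (intro continuous_intros)
  then show ?thesis by (simp add: poly_gp)
qed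

lemma ivt_strict:
  fixes f :: "real \<Rightarrow> real"
  assumes "continuous_on {a..b} f" "a \<le> b" "f a * f b < 0"
  shows "\<exists>x. a < x \<and> x < b \<and> f x = 0"
proof -
  have "\<exists>x. a \<le> x \<and> x \<le> b \<and> f x = 0"
  proof (cases "f a < 0")
    case True
    then have "f b > 0" using assms(3) by (simp add: mult_less_0_iff)
    then show ?thesis using IVT'[of f a 0 b] True assms by auto
  next
    case False
    then have "f a > 0" "f b < 0" using assms(3) by (auto simp add: mult_less_0_iff)
    then show ?thesis using IVT2'[of f b 0 a] assms by auto
  qed
  then obtain x where "a \<le> x" "x \<le> b" "f x = 0" by blast
  moreover have "f a \<noteq> 0" "f b \<noteq> 0" using assms(3) by auto
  ultimately show ?thesis by (metis order.not_eq_order_implies_strict)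
qed

lemma f_factor: assumes "p < d"
  shows "f_dp d p z = (\<Prod>i\<in>{1..d-p}. z + of_nat i) * Gf d p z"
  unfolding f_dp_def binom_poly_def Gf_def sum_distrib_left
proof (rule sum.cong)
  fix j assume j: "j \<in> {1..p}"
  have e: "d - j = (d - p) + (p - j)" using j assms by auto
  have "(\<Prod>i\<in>{1..d-j}. z + of_nat i) = (\<Prod>i\<in>{1..d-p}. z + of_nat i) * (\<Prod>i\<in>{d-p+1..d-j}. z + of_nat i)"
    unfolding e by (rule prod.ub_add_nat) simp
  then show "(\<Prod>i<j - 1. z + of_nat i) / of_nat (fact (j - 1)) *
          ((\<Prod>i\<in>{1..d - j}. z + of_nat i) / of_nat (fact (d - j))) =
         (\<Prod>i\<in>{1..d-p}. z + of_nat i) *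
         ((\<Prod>i<j - 1. z + of_nat i) / of_nat (fact (j - 1)) *
          ((\<Prod>i\<in>{d - p + 1..d - j}. z + of_nat i) / of_nat (fact (d - j))))"
    by simp
qed simp

theorem theorem2p6:
  fixes d p :: nat
  assumes "2 \<le> p" and "p < d" and "int d - 2 * int p + 2 \<ge> 0"
  shows "\<exists>\<alpha> :: nat \<Rightarrow> real.
           {z :: complex. f_dp d p z = 0} =
             {- of_nat k | k. 1 \<le> k \<and> k \<le> d - p} \<union> {complex_of_real (\<alpha> i) | i. 1 \<le> i \<and> i \<le> p - 1}
         \<and> (\<forall>i\<in>{1..p - 1}. - real i < \<alpha> i \<and> \<alpha> i < - (real i - 1))"
proof -
  have p2: "2 \<le> p" and pd: "p < d" and c: "2*p \<le> d + 2" using assms by auto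
  have ex: "\<forall>i\<in>{1..p - 1}. \<exists>x. - real i < x \<and> x < - (real i - 1) \<and> Gf d p x = 0"
  proof
    fix i assume i: "i \<in> {1..p-1}"
    have s1: "(-1)^i * Gf d p (- real i) > (0::real)" using Gsign[OF p2 pd c, of i] i by auto
    have s2: "(-1)^(i-1) * Gf d p (- real (i-1)) > (0::real)" using Gsign[OF p2 pd c, of "i-1"] i by auto
    have m: "((-1)^i * Gf d p (- real i)) * ((-1)^(i-1) * Gf d p (- real (i-1))) > (0::real)"
      using s1 s2 by simp
    have pw: "(-1::real)^i * (-1)^(i-1) = -1"
    proof -
      have "i = Suc (i-1)" using i by auto
      then have "(-1::real)^i = - ((-1)^(i-1))" by (metis power_Suc mult_minus1)
      then show ?thesis by (simp add: power_mult_distrib[symmetric])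
    qed
    have "Gf d p (- real i) * Gf d p (- real (i-1)) < (0::real)"
    proof -
      have "((-1)^i * Gf d p (- real i)) * ((-1)^(i-1) * Gf d p (- real (i-1))) =
            ((-1::real)^i * (-1)^(i-1)) * (Gf d p (- real i) * Gf d p (- real (i-1)))" by (simp add: ac_simps)
      with m pw show ?thesis by simp
    qed
    moreover have "- real (i-1) = - (real i - 1)" using i by auto
    ultimately show "\<exists>x. - real i < x \<and> x < - (real i - 1) \<and> Gf d p x = 0"
      using ivt_strict[of "- real i" "- (real i - 1)" "Gf d p", OF cont_Gf] by auto
  qed
  then obtain \<alpha> where \<alpha>: "\<forall>i\<in>{1..p - 1}. - real i < \<alpha> i \<and> \<alpha> i < - (real i - 1) \<and> Gf d p (\<alpha> i) = 0"
    by metis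
  define A where "A = (\<lambda>i. complex_of_real (\<alpha> i)) ` {1..p-1}"
  define R where "R = {z::complex. Gf d p z = 0}"
  have inj: "inj_on (\<lambda>i. complex_of_real (\<alpha> i)) {1..p-1}"
  proof (rule inj_onI)
    fix i j assume ij: "i \<in> {1..p-1}" "j \<in> {1..p-1}" "complex_of_real (\<alpha> i) = complex_of_real (\<alpha> j)"
    then have e: "\<alpha> i = \<alpha> j" by simp
    show "i = j"
    proof (rule ccontr)
      assume "i \<noteq> j"
      then consider "i < j" | "j < i" by linarith
      then show False
      proof cases
        case 1
        then have "real i + 1 \<le> real j" by simp
        moreover have "- real i < \<alpha> i" "\<alpha> j < - (real j - 1)" using \<alpha> ij(1,2) by auto
        ultimately show False using e by linarith
      next
        case 2
        then have "real j + 1 \<le> real i" by simp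
        moreover have "- real j < \<alpha> j" "\<alpha> i < - (real i - 1)" using \<alpha> ij(1,2) by auto
        ultimately show False using e by linarith
      qed
    qed
  qed
  have cardA: "card A = p - 1" unfolding A_def using card_image[OF inj] by simp
  have AR: "A \<subseteq> R" unfolding A_def R_def using \<alpha> by (auto simp: Gf_of_real)
  have g0: "Gf d p (0::complex) \<noteq> 0"
  proof -
    have "(-1)^0 * Gf d p (- real 0) > (0::real)" using Gsign[OF p2 pd c, of 0] p2 by auto
    then have "Gf d p (0::real) \<noteq> 0" by simp
    then show ?thesis using Gf_of_real[of d p 0] by simp
  qed
  have nz: "(gp d p :: complex poly) \<noteq> 0"
  proof
    assume "(gp d p :: complex poly) = 0"
    then have "poly (gp d p) (0::complex) = 0" by simp
    then show False using g0 by (simp add: poly_gp)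
  qed
  have Req: "R = {z. poly (gp d p) z = 0}" unfolding R_def by (simp add: poly_gp)
  have finR: "finite R" unfolding Req using poly_roots_finite[OF nz] .
  have "card R \<le> p - 1" unfolding Req using card_poly_roots_bound[OF nz] degree_gp[OF pd, where 'a=complex] by linarith
  then have RA: "R = A" using card_seteq[OF finR AR] cardA by simp
  have P0: "{z::complex. (\<Prod>i\<in>{1..d-p}. z + of_nat i) = 0} = {- of_nat k | k. 1 \<le> k \<and> k \<le> d - p}"
  proof (rule set_eqI)
    fix z :: complex
    have "(\<Prod>i\<in>{1..d-p}. z + of_nat i) = 0 \<longleftrightarrow> (\<exists>k\<in>{1..d-p}. z + of_nat k = 0)"
      by (simp add: prod_zero_iff)
    also have "\<dots> \<longleftrightarrow> (\<exists>k. z = - of_nat k \<and> 1 \<le> k \<and> k \<le> d - p)"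
    proof
      assume "\<exists>k\<in>{1..d-p}. z + of_nat k = 0"
      then obtain k where k: "k \<in> {1..d-p}" "z + of_nat k = 0" by blast
      then have "z = - of_nat k" by (simp add: eq_neg_iff_add_eq_0)
      with k show "\<exists>k. z = - of_nat k \<and> 1 \<le> k \<and> k \<le> d - p" by auto
    next
      assume "\<exists>k. z = - of_nat k \<and> 1 \<le> k \<and> k \<le> d - p"
      then obtain k where "z = - of_nat k" "1 \<le> k" "k \<le> d - p" by blast
      then show "\<exists>k\<in>{1..d-p}. z + of_nat k = 0" by auto
    qed
    finally show "z \<in> {z::complex. (\<Prod>i\<in>{1..d-p}. z + of_nat i) = 0} \<longleftrightarrow> z \<in> {- of_nat k | k. 1 \<le> k \<and> k \<le> d - p}"
      by auto
  qed
  have "{z :: complex. f_dp d p z = 0} = {z::complex. (\<Prod>i\<in>{1..d-p}. z + of_nat i) = 0} \<union> R"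
    unfolding R_def by (auto simp: f_factor[OF pd])
  also have "\<dots> = {- of_nat k | k. 1 \<le> k \<and> k \<le> d - p} \<union> {complex_of_real (\<alpha> i) | i. 1 \<le> i \<and> i \<le> p - 1}"
    unfolding P0 RA A_def by auto
  finally show ?thesis using \<alpha> by blast
qed

end
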